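(* Let $\theta\colon G\curvearrowright\Omega$ and $\theta'\colon H\curvearrowright\Omega'$ be partial actions of discrete groups on topological spaces with $\theta\approx\theta'$. Then there is a partial action $\gamma$ of $G\times H$ on a topological space such that $\theta\xleftarrow{\approx}\gamma\xrightarrow{\approx}\theta'$, i.e. there are direct dynamical equivalences from $\gamma$ to $\theta$ and from $\gamma$ to $\theta'$.
   Context: For a partial action $\theta\colon G\curvearrowright\Omega$, $\Omega_g$ denotes the domain (open) of $\theta_{g^{-1}}$, so $\theta_g\colon\Omega_{g^{-1}}\to\Omega_g$, and $g.x=\theta_g(x)$. Dynamical equivalence $\theta\approx\theta'$ means: there are a homeomorphism $\varphi\colon\Omega\to\Omega'$ and continuous maps $a\colon\bigcup_{g\in G}\{g\}\times\Omega_{g^{-1}}\to H$, $b\colon\bigcup_{h\in H}\{h\}\times\Omega'_{h^{-1}}\to G$ ($G,H$ discrete) such that for all $g\in G,h\in H,x\in\Omega_{g^{-1}},y\in\Omega'_{h^{-1}}$: (1) $\varphi(x)\in\Omega'_{a(g,x)^{-1}}$ and $\varphi(g.x)=a(g,x).\varphi(x)$; (2) $\varphi^{-1}(y)\in\Omega_{b(h,y)^{-1}}$ and $\varphi^{-1}(h.y)=b(h,y).\varphi^{-1}(y)$; (3) $b(a(g,x),\varphi(x))=g$ and $a(b(h,y),\varphi^{-1}(y))=h$; (4) $a(g'g,x)=a(g',g.x)a(g,x)$ if $g.x\in\Omega_{g'^{-1}}$; (5) $b(h'h,y)=b(h',h.y)b(h,y)$ if $h.y\in\Omega'_{h'^{-1}}$.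 Given a group homomorphism $\Psi\colon G\to H$, a continuous map $\varphi\colon\Omega\to\Omega'$ is $\Psi$-equivariant if $\varphi(\Omega_g)\subseteq\Omega'_{\Psi(g)}$ for all $g$ and $\varphi(g.x)=\Psi(g).\varphi(x)$ for $x\in\Omega_{g^{-1}}$. A pair $(\varphi,\Psi)$ with $\varphi$ $\Psi$-equivariant is a direct dynamical equivalence, written $\theta\xrightarrow{\approx}\theta'$, if (a) $\varphi$ is a homeomorphism, (b) $\Omega_g\cap\Omega_{g'}=\emptyset$ for all $g\ne g'$ with $\Psi(g)=\Psi(g')$, (c) $\Omega'_h=\bigcup_{\Psi(g)=h}\varphi(\Omega_g)$ for all $h\in H$. *)

theory Defs
  imports "HOL-Analysis.Analysis" "HOL-Library.Product_Plus"
begin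

text \<open>Groups are written additively (type class group_add, not necessarily abelian):
  g + h is the group product gh, -g is the inverse, 0 the identity.
  A partial action of the (discrete) group 'g on the space X is given by
  the domains D g (= Omega_g, the domain of theta_(-g)) and the maps theta g,
  theta g : D (-g) -> D g.\<close>

definition partial_action ::
  "'a topology \<Rightarrow> ('g::group_add \<Rightarrow> 'a set) \<Rightarrow> ('g \<Rightarrow> 'a \<Rightarrow> 'a) \<Rightarrow> bool" where
  "partial_action X D \<theta> \<longleftrightarrow>
     (\<forall>g. openin X (D g)) \<and>
     D 0 = topspace X \<and>
     (\<forall>x\<in>topspace X. \<theta> 0 x = x) \<and>
     (\<forall>g. homeomorphic_map (subtopology X (D (- g))) (subtopology X (D g)) (\<theta> g)) \<and>
     (\<forall>g h x. x \<in> D (- h) \<and> \<theta> h x \<in> D (- g) \<longrightarrow>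
          x \<in> D (- (g + h)) \<and> \<theta> (g + h) x = \<theta> g (\<theta> h x))"

definition dyn_equiv ::
  "'a topology \<Rightarrow> ('g::group_add \<Rightarrow> 'a set) \<Rightarrow> ('g \<Rightarrow> 'a \<Rightarrow> 'a) \<Rightarrow>
   'b topology \<Rightarrow> ('h::group_add \<Rightarrow> 'b set) \<Rightarrow> ('h \<Rightarrow> 'b \<Rightarrow> 'b) \<Rightarrow> bool" where
  "dyn_equiv X D \<theta> X' D' \<theta>' \<longleftrightarrow>
    (\<exists>\<phi> \<psi> (a :: 'g \<times> 'a \<Rightarrow> 'h) (b :: 'h \<times> 'b \<Rightarrow> 'g).
       homeomorphic_maps X X' \<phi> \<psi> \<and>
       continuous_map (subtopology (prod_topology (discrete_topology UNIV) X) (SIGMA g:UNIV. D (- g)))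
                      (discrete_topology UNIV) a \<and>
       continuous_map (subtopology (prod_topology (discrete_topology UNIV) X') (SIGMA h:UNIV. D' (- h)))
                      (discrete_topology UNIV) b \<and>
       (\<forall>g x. x \<in> D (- g) \<longrightarrow>
           \<phi> x \<in> D' (- a (g, x)) \<and> \<phi> (\<theta> g x) = \<theta>' (a (g, x)) (\<phi> x)) \<and>
       (\<forall>h y. y \<in> D' (- h) \<longrightarrow>
           \<psi> y \<in> D (- b (h, y)) \<and> \<psi> (\<theta>' h y) = \<theta> (b (h, y)) (\<psi> y)) \<and>
       (\<forall>g x. x \<in> D (- g) \<longrightarrow> b (a (g, x), \<phi> x) = g) \<and>
       (\<forall>h y. y \<in> D' (- h) \<longrightarrow> a (b (h, y), \<psi> y) = h) \<and>
       (\<forall>g g' x. x \<in> D (- g) \<and> \<theta> g x \<in> D (- g') \<longrightarrow>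
           a (g' + g, x) = a (g', \<theta> g x) + a (g, x)) \<and>
       (\<forall>h h' y. y \<in> D' (- h) \<and> \<theta>' h y \<in> D' (- h') \<longrightarrow>
           b (h' + h, y) = b (h', \<theta>' h y) + b (h, y)))"

definition group_hom :: "('g::group_add \<Rightarrow> 'h::group_add) \<Rightarrow> bool" where
  "group_hom \<Psi> \<longleftrightarrow> (\<forall>x y. \<Psi> (x + y) = \<Psi> x + \<Psi> y)"

definition equivariant ::
  "'a topology \<Rightarrow> ('g::group_add \<Rightarrow> 'a set) \<Rightarrow> ('g \<Rightarrow> 'a \<Rightarrow> 'a) \<Rightarrow>
   'b topology \<Rightarrow> ('h::group_add \<Rightarrow> 'b set) \<Rightarrow> ('h \<Rightarrow> 'b \<Rightarrow> 'b) \<Rightarrow>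
   ('a \<Rightarrow> 'b) \<Rightarrow> ('g \<Rightarrow> 'h) \<Rightarrow> bool" where
  "equivariant X D \<theta> X' D' \<theta>' \<phi> \<Psi> \<longleftrightarrow>
     continuous_map X X' \<phi> \<and>
     (\<forall>g. \<phi> ` D g \<subseteq> D' (\<Psi> g)) \<and>
     (\<forall>g x. x \<in> D (- g) \<longrightarrow> \<phi> (\<theta> g x) = \<theta>' (\<Psi> g) (\<phi> x))"

definition direct_dyn_equiv ::
  "'a topology \<Rightarrow> ('g::group_add \<Rightarrow> 'a set) \<Rightarrow> ('g \<Rightarrow> 'a \<Rightarrow> 'a) \<Rightarrow>
   'b topology \<Rightarrow> ('h::group_add \<Rightarrow> 'b set) \<Rightarrow> ('h \<Rightarrow> 'b \<Rightarrow> 'b) \<Rightarrow>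
   ('a \<Rightarrow> 'b) \<Rightarrow> ('g \<Rightarrow> 'h) \<Rightarrow> bool" where
  "direct_dyn_equiv X D \<theta> X' D' \<theta>' \<phi> \<Psi> \<longleftrightarrow>
     group_hom \<Psi> \<and>
     equivariant X D \<theta> X' D' \<theta>' \<phi> \<Psi> \<and>
     homeomorphic_map X X' \<phi> \<and>
     (\<forall>g g'. g \<noteq> g' \<and> \<Psi> g = \<Psi> g' \<longrightarrow> D g \<inter> D g' = {}) \<and>
     (\<forall>h. D' h = (\<Union>g\<in>{g. \<Psi> g = h}. \<phi> ` D g))"

end

theory Submission
  imports Defs
begin

lemma pa_sub: "partial_action X D \<theta> \<Longrightarrow> D g \<subseteq> topspace X"
  unfolding partial_action_def by (meson openin_subset)

lemma pa_maps: assumes "partial_action X D \<theta>" "x \<in> D (- g)" shows "\<theta> g x \<in> D g"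
proof -
  have "homeomorphic_map (subtopology X (D (- g))) (subtopology X (D g)) (\<theta> g)"
    using assms(1) unfolding partial_action_def by blast
  hence "\<theta> g ` (topspace X \<inter> D (- g)) = topspace X \<inter> D g"
    using homeomorphic_imp_surjective_map by fastforce
  thus ?thesis using assms pa_sub[OF assms(1)] by blast
qed

theorem proposition3:
  fixes X :: "'a topology" and D :: "'g::group_add \<Rightarrow> 'a set" and \<theta> :: "'g \<Rightarrow> 'a \<Rightarrow> 'a"
    and X' :: "'b topology" and D' :: "'h::group_add \<Rightarrow> 'b set" and \<theta>' :: "'h \<Rightarrow> 'b \<Rightarrow> 'b"
  assumes PA: "partial_action X D \<theta>"
    and PA': "partial_action X' D' \<theta>'"
    and "dyn_equiv X D \<theta> X' D' \<theta>'"
  shows "\<exists>(Z :: 'a topology) (E :: 'g \<times> 'h \<Rightarrow> 'a set) (\<gamma> :: 'g \<times> 'h \<Rightarrow> 'a \<Rightarrow> 'a).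
           partial_action Z E \<gamma> \<and>
           (\<exists>\<phi> \<Psi>. direct_dyn_equiv Z E \<gamma> X D \<theta> \<phi> \<Psi>) \<and>
           (\<exists>\<phi> \<Psi>. direct_dyn_equiv Z E \<gamma> X' D' \<theta>' \<phi> \<Psi>)"
proof -
  obtain \<phi> \<psi> and a :: "'g \<times> 'a \<Rightarrow> 'h" and b :: "'h \<times> 'b \<Rightarrow> 'g" where
    hm: "homeomorphic_maps X X' \<phi> \<psi>" and
    ca: "continuous_map (subtopology (prod_topology (discrete_topology UNIV) X) (SIGMA g:UNIV. D (- g)))
                      (discrete_topology UNIV) a" and
    f1: "\<forall>g x. x \<in> D (- g) \<longrightarrow> \<phi> x \<in> D' (- a (g, x)) \<and> \<phi> (\<theta> g x) = \<theta>' (a (g, x)) (\<phi> x)" and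
    f2: "\<forall>h y. y \<in> D' (- h) \<longrightarrow> \<psi> y \<in> D (- b (h, y)) \<and> \<psi> (\<theta>' h y) = \<theta> (b (h, y)) (\<psi> y)" and
    f3: "\<forall>g x. x \<in> D (- g) \<longrightarrow> b (a (g, x), \<phi> x) = g" and
    f4: "\<forall>h y. y \<in> D' (- h) \<longrightarrow> a (b (h, y), \<psi> y) = h" and
    f5: "\<forall>g g' x. x \<in> D (- g) \<and> \<theta> g x \<in> D (- g') \<longrightarrow> a (g' + g, x) = a (g', \<theta> g x) + a (g, x)"
    using assms(3) unfolding dyn_equiv_def by blast
  have e1: "\<And>g x. x \<in> D (- g) \<Longrightarrow> \<phi> x \<in> D' (- a (g, x)) \<and> \<phi> (\<theta> g x) = \<theta>' (a (g, x)) (\<phi> x)"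
    using f1 by blast
  have e2: "\<And>h y. y \<in> D' (- h) \<Longrightarrow> \<psi> y \<in> D (- b (h, y)) \<and> \<psi> (\<theta>' h y) = \<theta> (b (h, y)) (\<psi> y)"
    using f2 by blast
  have e3: "\<And>g x. x \<in> D (- g) \<Longrightarrow> b (a (g, x), \<phi> x) = g" using f3 by blast
  have e4: "\<And>h y. y \<in> D' (- h) \<Longrightarrow> a (b (h, y), \<psi> y) = h" using f4 by blast
  have e5: "\<And>g g' x. x \<in> D (- g) \<Longrightarrow> \<theta> g x \<in> D (- g') \<Longrightarrow> a (g' + g, x) = a (g', \<theta> g x) + a (g, x)"
    using f5 by blast
  have Dsub: "\<And>g. D g \<subseteq> topspace X" using pa_sub[OF PA] .
  have D'sub: "\<And>h. D' h \<subseteq> topspace X'" using pa_sub[OF PA'] .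
  have D0: "D 0 = topspace X" and th0: "\<And>x. x \<in> topspace X \<Longrightarrow> \<theta> 0 x = x"
    and comp: "\<And>g h x. x \<in> D (- h) \<Longrightarrow> \<theta> h x \<in> D (- g) \<Longrightarrow>
          x \<in> D (- (g + h)) \<and> \<theta> (g + h) x = \<theta> g (\<theta> h x)"
    and opn: "\<And>g. openin X (D g)"
    and hom: "\<And>g. homeomorphic_map (subtopology X (D (- g))) (subtopology X (D g)) (\<theta> g)"
    using PA unfolding partial_action_def by blast+
  have a0: "a (0, x) = 0" if "x \<in> topspace X" for x
  proof -
    have x: "x \<in> D (- 0)" using D0 that by simp
    have "a (0 + 0, x) = a (0, \<theta> 0 x) + a (0, x)" using e5[OF x] th0[OF that] x by simp
    thus ?thesis using th0[OF that] by (metis add_left_imp_eq add_0_right)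
  qed
  have ainv: "a (- g, \<theta> g x) = - a (g, x)" if x: "x \<in> D (- g)" for g x
  proof -
    have t: "\<theta> g x \<in> D (- (- g))" using pa_maps[OF PA x] by simp
    have "a (- g + g, x) = a (- g, \<theta> g x) + a (g, x)" using e5[OF x t] .
    moreover have "x \<in> topspace X" using x Dsub by blast
    ultimately have "0 = a (- g, \<theta> g x) + a (g, x)" using a0 by simp
    thus ?thesis by (simp add: eq_neg_iff_add_eq_0)
  qed
  define E :: "'g \<times> 'h \<Rightarrow> 'a set" where "E = (\<lambda>(g,h). {y \<in> D g. a (- g, y) = - h})"
  have Em: "y \<in> E (-(g,h)) \<longleftrightarrow> y \<in> D (- g) \<and> a (g, y) = h" for g h y
    unfolding E_def by auto
  have Em2: "y \<in> E (g,h) \<longleftrightarrow> y \<in> D g \<and> a (- g, y) = - h" for g h y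
    unfolding E_def by auto
  define \<gamma> :: "'g \<times> 'h \<Rightarrow> 'a \<Rightarrow> 'a" where "\<gamma> = (\<lambda>gh. \<theta> (fst gh))"
  have PAZ: "partial_action X E \<gamma>"
    unfolding partial_action_def
  proof (intro conjI allI impI)
    fix gh :: "'g \<times> 'h"
    obtain g h where gh: "gh = (g,h)" by (cases gh)
    have cont: "continuous_map (subtopology X (D g)) (discrete_topology UNIV) (\<lambda>y. a (- g, y))"
    proof -
      have "continuous_map (subtopology X (D g))
              (subtopology (prod_topology (discrete_topology UNIV) X) (SIGMA g:UNIV. D (- g))) (\<lambda>y. (- g, y))"
        by (auto intro!: continuous_map_into_subtopology continuous_map_pairedI
              simp: continuous_map_from_subtopology)
      from continuous_map_compose[OF this ca] show ?thesis by (simp add: o_def)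
    qed
    have "openin (subtopology X (D g)) {y \<in> topspace (subtopology X (D g)). a (- g, y) \<in> {- h}}"
      by (rule openin_continuous_map_preimage[OF cont]) simp
    moreover have "{y \<in> topspace (subtopology X (D g)). a (- g, y) \<in> {- h}} = E gh"
      using Dsub unfolding gh E_def by auto
    ultimately show "openin X (E gh)" using openin_trans_full opn by metis
  next
    show "E 0 = topspace X" using a0 D0 by (auto simp: E_def zero_prod_def)
  next
    show "\<forall>x\<in>topspace X. \<gamma> 0 x = x" using th0 by (simp add: \<gamma>_def zero_prod_def)
  next
    fix gh :: "'g \<times> 'h"
    obtain g h where gh: "gh = (g,h)" by (cases gh)
    have "homeomorphic_map (subtopology (subtopology X (D (- g))) (E (- gh)))
                           (subtopology (subtopology X (D g)) (E gh)) (\<theta> g)"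
    proof (rule homeomorphic_map_subtopologies_alt[OF hom])
      fix x assume x: "x \<in> topspace (subtopology X (D (- g)))"
      hence xD: "x \<in> D (- g)" by simp
      show "\<theta> g x \<in> E gh \<longleftrightarrow> x \<in> E (- gh)"
        unfolding gh Em Em2 using xD pa_maps[OF PA xD] ainv[OF xD] by auto
    qed
    moreover have "E (- gh) \<subseteq> D (- g)" "E gh \<subseteq> D g" unfolding gh by (auto simp: E_def)
    ultimately show "homeomorphic_map (subtopology X (E (- gh))) (subtopology X (E gh)) (\<gamma> gh)"
      by (simp add: subtopology_subtopology \<gamma>_def gh Int_absorb1 inf.absorb2)
  next
    fix gh kl :: "'g \<times> 'h" and x
    assume A: "x \<in> E (- kl) \<and> \<gamma> kl x \<in> E (- gh)"
    obtain g h where gh: "gh = (g,h)" by (cases gh)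
    obtain k l where kl: "kl = (k,l)" by (cases kl)
    from A have x: "x \<in> D (- k)" "a (k, x) = l" "\<theta> k x \<in> D (- g)" "a (g, \<theta> k x) = h"
      unfolding gh kl Em \<gamma>_def by auto
    show "x \<in> E (- (gh + kl))"
      using comp[OF x(1) x(3)] e5[OF x(1) x(3)] x unfolding gh kl
      by (simp add: E_def minus_add)
    show "\<gamma> (gh + kl) x = \<gamma> gh (\<gamma> kl x)"
      using comp[OF x(1) x(3)] unfolding gh kl \<gamma>_def by simp
  qed
  have ddX: "direct_dyn_equiv X E \<gamma> X D \<theta> id fst"
    unfolding direct_dyn_equiv_def group_hom_def equivariant_def
  proof (intro conjI allI impI)
    fix gh :: "'g \<times> 'h" show "id ` E gh \<subseteq> D (fst gh)" by (auto simp: E_def)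
  next
    fix gh gh' :: "'g \<times> 'h" assume "gh \<noteq> gh' \<and> fst gh = fst gh'"
    thus "E gh \<inter> E gh' = {}" by (cases gh; cases gh') (auto simp: E_def)
  next
    fix g :: 'g
    show "D g = (\<Union>gh\<in>{gh. fst gh = g}. id ` E gh)"
    proof safe
      fix y assume "y \<in> D g"
      hence "y \<in> E (g, - a (- g, y))" by (simp add: Em2)
      thus "y \<in> (\<Union>gh\<in>{gh. fst gh = g}. id ` E gh)" by force
    qed (auto simp: E_def)
  qed (auto simp: \<gamma>_def)
  have hmap: "homeomorphic_map X X' \<phi>" using hm homeomorphic_map_maps by blast
  have \<phi>\<psi>: "\<And>z. z \<in> topspace X' \<Longrightarrow> \<phi> (\<psi> z) = z" "\<And>z. z \<in> topspace X' \<Longrightarrow> \<psi> z \<in> topspace X"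
    using hm unfolding homeomorphic_maps_def continuous_map_def by auto
  have ddX': "direct_dyn_equiv X E \<gamma> X' D' \<theta>' \<phi> snd"
    unfolding direct_dyn_equiv_def group_hom_def equivariant_def
  proof (intro conjI allI impI)
    show "continuous_map X X' \<phi>" using hmap homeomorphic_imp_continuous_map by blast
  next
    show "homeomorphic_map X X' \<phi>" by (rule hmap)
  next
    fix gh :: "'g \<times> 'h" 
    obtain g h where gh: "gh = (g,h)" by (cases gh)
    show "\<phi> ` E gh \<subseteq> D' (snd gh)"
    proof
      fix z assume "z \<in> \<phi> ` E gh"
      then obtain y where y: "y \<in> D g" "a (- g, y) = - h" "z = \<phi> y" unfolding gh by (auto simp: Em2)
      have y': "y \<in> D (- (- g))" using y by simp
      have "\<phi> y \<in> D' (- a (- g, y))" using e1[OF y'] by blast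
      thus "z \<in> D' (snd gh)" using y gh by simp
    qed
  next
    fix gh :: "'g \<times> 'h" and x assume x: "x \<in> E (- gh)"
    obtain g h where gh: "gh = (g,h)" by (cases gh)
    from x have "x \<in> D (- g)" "a (g, x) = h" unfolding gh Em by auto
    thus "\<phi> (\<gamma> gh x) = \<theta>' (snd gh) (\<phi> x)" using e1 by (simp add: \<gamma>_def gh)
  next
    fix gh gh' :: "'g \<times> 'h" assume A: "gh \<noteq> gh' \<and> snd gh = snd gh'"
    obtain g h where gh: "gh = (g,h)" by (cases gh)
    obtain g' h' where gh': "gh' = (g',h')" by (cases gh')
    show "E gh \<inter> E gh' = {}"
    proof (rule ccontr)
      assume "E gh \<inter> E gh' \<noteq> {}"
      then obtain y where y: "y \<in> D g" "a (- g, y) = - h" "y \<in> D g'" "a (- g', y) = - h'"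
        unfolding gh gh' by (auto simp: Em2)
      have "b (a (- g, y), \<phi> y) = - g" using e3[of y "- g"] y by simp
      moreover have "b (a (- g', y), \<phi> y) = - g'" using e3[of y "- g'"] y by simp
      ultimately show False using A y gh gh' by auto
    qed
  next
    fix h :: 'h
    show "D' h = (\<Union>gh\<in>{gh. snd gh = h}. \<phi> ` E gh)"
    proof (intro equalityI subsetI)
      fix z assume z: "z \<in> D' h"
      define k where "k = b (- h, z)"
      have z': "z \<in> D' (- (- h))" using z by simp
      have "\<psi> z \<in> D (- k)" "a (k, \<psi> z) = - h" using e2[OF z'] e4[OF z'] k_def by auto
      hence 1: "\<psi> z \<in> E (- k, h)" by (simp add: Em2)
      have "z \<in> topspace X'" using z D'sub[of h] by blast
      hence 2: "z = \<phi> (\<psi> z)" using \<phi>\<psi>(1)[of z] by simp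
      show "z \<in> (\<Union>gh\<in>{gh. snd gh = h}. \<phi> ` E gh)" using 1 2 by force
    next
      fix w assume "w \<in> (\<Union>gh\<in>{gh. snd gh = h}. \<phi> ` E gh)"
      then obtain g z where "z \<in> E (g, h)" "w = \<phi> z" by auto
      then have y: "z \<in> D g" "a (- g, z) = - h" "w = \<phi> z" by (auto simp: Em2)
      have y': "z \<in> D (- (- g))" using y by simp
      show "w \<in> D' h" using e1[OF y'] y by simp
    qed
  qed (auto simp: \<gamma>_def)
  show ?thesis using PAZ ddX ddX' by blast
qed

end
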